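(* Let $h$ be the Hahn sequence space and let $\Delta:h\to h$ be the forward difference operator $(\Delta x)_k=x_k-x_{k+1}$. Then the continuous spectrum of $\Delta$ on $h$ is $$\sigma_c(\Delta,h)=\{\alpha\in\mathbb{C}:|1-\alpha|=1\}.$$
   Context: Sequences are indexed by $\mathbb{N}=\{0,1,2,\dots\}$. The Hahn sequence space is $h=\{x=(x_k):\sum_{k=1}^\infty k|x_k-x_{k+1}|<\infty \text{ and } \lim_{k\to\infty}x_k=0\}$, a Banach space with norm $\|x\|_h=\sum_k k|x_k-x_{k+1}|+\sup_k|x_k|$. $\Delta$ is given by the matrix with $1$ on the main diagonal and $-1$ on the first superdiagonal. For a bounded operator $T$ on a Banach space $X$, the continuous spectrum $\sigma_c(T,X)$ is the set of $\alpha\in\mathbb{C}$ such that $\alpha I-T$ is injective, its range is dense in $X$, and its inverse (defined on the range) is unbounded. *)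

theory Defs
  imports "HOL-Analysis.Analysis"
begin

definition hahn :: "(nat \<Rightarrow> complex) set" where
  "hahn = {x. summable (\<lambda>k. real k * cmod (x k - x (Suc k))) \<and> x \<longlonglongrightarrow> 0}"

definition hahn_norm :: "(nat \<Rightarrow> complex) \<Rightarrow> real" where
  "hahn_norm x = (\<Sum>k. real k * cmod (x k - x (Suc k))) + (SUP k. cmod (x k))"

definition fwd_diff :: "(nat \<Rightarrow> complex) \<Rightarrow> (nat \<Rightarrow> complex)" where
  "fwd_diff x = (\<lambda>k. x k - x (Suc k))"

definition cont_spectrum ::
  "((nat \<Rightarrow> complex) \<Rightarrow> (nat \<Rightarrow> complex)) \<Rightarrow> (nat \<Rightarrow> complex) set
     \<Rightarrow> ((nat \<Rightarrow> complex) \<Rightarrow> real) \<Rightarrow> complex set" where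
  "cont_spectrum T X nrm =
     {\<alpha>. let S = (\<lambda>x. (\<lambda>k. \<alpha> * x k - T x k)) in
        inj_on S X
      \<and> (\<forall>y\<in>X. \<forall>\<epsilon>>0. \<exists>x\<in>X. nrm (\<lambda>k. S x k - y k) < \<epsilon>)
      \<and> \<not> (\<exists>C. \<forall>x\<in>X. nrm x \<le> C * nrm (S x))}"

end

theory Submission
  imports Defs
begin

definition Sop :: "complex \<Rightarrow> (nat \<Rightarrow> complex) \<Rightarrow> nat \<Rightarrow> complex" where
  "Sop b x = (\<lambda>k. x (Suc k) - b * x k)"

lemma summable_nr:
  assumes "0 \<le> (r::real)" "r < 1" shows "summable (\<lambda>n. real n * r ^ n)"
proof -
  have "summable (\<lambda>n. of_nat (Suc n) * r ^ n)"
    using geometric_deriv_sums[of r] assms by (auto simp: sums_iff)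
  then show ?thesis
    by (rule summable_comparison_test'[where N=0]) (use assms in \<open>auto intro!: mult_right_mono\<close>)
qed

lemma geo_hahn: assumes "cmod q < 1" shows "(\<lambda>k. q ^ k) \<in> hahn"
proof -
  have "summable (\<lambda>k. real k * cmod (q ^ k - q ^ Suc k))"
  proof -
    have "summable (\<lambda>k. cmod (1-q) * (real k * cmod q ^ k))"
      by (rule summable_mult) (rule summable_nr, auto simp: assms)
    moreover have "(\<lambda>k. real k * cmod (q ^ k - q ^ Suc k)) = (\<lambda>k. cmod (1-q) * (real k * cmod q ^ k))"
    proof
      fix k
      have "q^k - q^Suc k = q^k * (1-q)" by (simp add: algebra_simps)
      then show "real k * cmod (q ^ k - q ^ Suc k) = cmod (1-q) * (real k * cmod q ^ k)" by (simp add: norm_mult norm_power)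
    qed
    ultimately show ?thesis by simp
  qed
  moreover have "(\<lambda>k. q^k) \<longlonglongrightarrow> 0" using LIMSEQ_power_zero[OF assms] by simp
  ultimately show ?thesis by (simp add: hahn_def)
qed

lemma bdd_tend: assumes "x \<longlonglongrightarrow> 0" shows "bdd_above (range (\<lambda>k. cmod (x k)))"
proof -
  have "Bseq x" using convergent_imp_Bseq[OF convergentI[OF assms]] .
  then obtain K where "\<forall>n. norm (x n) \<le> K" by (auto simp: Bseq_def)
  then show ?thesis by (intro bdd_aboveI2) auto
qed

lemma hahn_norm_ge: assumes "x \<in> hahn" shows "cmod (x j) \<le> hahn_norm x"
proof -
  have s: "summable (\<lambda>k. real k * cmod (x k - x (Suc k)))" and t: "x \<longlonglongrightarrow> 0"
    using assms by (auto simp: hahn_def)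
  have "0 \<le> (\<Sum>k. real k * cmod (x k - x (Suc k)))" by (rule suminf_nonneg[OF s]) simp
  moreover have "cmod (x j) \<le> (SUP k. cmod (x k))" by (rule cSUP_upper[OF _ bdd_tend[OF t]]) simp
  ultimately show ?thesis by (simp add: hahn_norm_def)
qed

lemma SUP_scale:
  assumes bdd: "bdd_above (range f)" and a: "0 \<le> (a::real)"
  shows "(SUP k. a * f k) = a * (SUP k. f k)"
proof (cases "a = 0")
  case True then show ?thesis by simp
next
  case False
  then have a0: "a > 0" using a by simp
  obtain M where M: "\<And>k. f k \<le> M" using bdd by (auto simp: bdd_above_def)
  have bdd2: "bdd_above (range (\<lambda>k. a * f k))"
    by (rule bdd_aboveI2[where M="a*M"]) (use M a in \<open>auto intro: mult_left_mono\<close>)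
  show ?thesis
  proof (rule antisym)
    show "(SUP k. a * f k) \<le> a * (SUP k. f k)"
      by (rule cSUP_least) (auto intro!: mult_left_mono cSUP_upper bdd a)
    have "(SUP k. f k) \<le> (SUP k. a * f k) / a"
    proof (rule cSUP_least)
      fix k
      have "a * f k \<le> (SUP k. a * f k)" by (rule cSUP_upper[OF _ bdd2]) simp
      then show "f k \<le> (SUP k. a * f k) / a" using a0 by (simp add: field_simps)
    qed simp
    then show "a * (SUP k. f k) \<le> (SUP k. a * f k)" using a0 by (simp add: field_simps)
  qed
qed

lemma hahn_norm_scale: assumes "x \<in> hahn"
  shows "hahn_norm (\<lambda>k. c * x k) = cmod c * hahn_norm x"
proof -
  have s: "summable (\<lambda>k. real k * cmod (x k - x (Suc k)))" and t: "x \<longlonglongrightarrow> 0"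
    using assms by (auto simp: hahn_def)
  have 1: "(\<Sum>k. real k * cmod (c * x k - c * x (Suc k))) = cmod c * (\<Sum>k. real k * cmod (x k - x (Suc k)))"
  proof -
    have "(\<lambda>k. real k * cmod (c * x k - c * x (Suc k))) = (\<lambda>k. cmod c * (real k * cmod (x k - x (Suc k))))"
      by (rule ext) (simp add: right_diff_distrib[symmetric] norm_mult)
    then show ?thesis using suminf_mult[OF s, of "cmod c"] by simp
  qed
  have 2: "(SUP k. cmod (c * x k)) = cmod c * (SUP k. cmod (x k))"
    using SUP_scale[OF bdd_tend[OF t], of "cmod c"] by (simp add: norm_mult)
  show ?thesis unfolding hahn_norm_def using 1 2 by (simp add: algebra_simps)
qed

lemma Sop_tend: assumes "x \<longlonglongrightarrow> 0" shows "Sop b x \<longlonglongrightarrow> 0"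
proof -
  have "(\<lambda>k. x (Suc k)) \<longlonglongrightarrow> 0" using assms by (rule LIMSEQ_Suc)
  moreover have "(\<lambda>k. b * x k) \<longlonglongrightarrow> 0" using assms by (rule tendsto_mult_right_zero)
  ultimately show ?thesis unfolding Sop_def using tendsto_diff by fastforce
qed

lemma bounded_inv:
  assumes x: "x \<in> hahn" and b: "1 < cmod b"
  shows "hahn_norm x \<le> (1 / (cmod b - 1)) * hahn_norm (Sop b x)"
proof -
  define d where "d = (\<lambda>k. x k - x (Suc k))"
  define y where "y = Sop b x"
  define e where "e = (\<lambda>k. y k - y (Suc k))"
  have s: "summable (\<lambda>k. real k * cmod (d k))" and t: "x \<longlonglongrightarrow> 0"
    using x by (auto simp: hahn_def d_def)
  have ty: "y \<longlonglongrightarrow> 0" unfolding y_def using t by (rule Sop_tend)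
  have e_eq: "e k = d (Suc k) - b * d k" for k by (simp add: e_def d_def y_def Sop_def algebra_simps)
  have s1: "summable (\<lambda>k. real (Suc k) * cmod (d (Suc k)))"
    using s summable_Suc_iff[of "\<lambda>k. real k * cmod (d k)"] by simp
  have se: "summable (\<lambda>k. real k * cmod (e k))"
  proof (rule summable_comparison_test'[where N=0])
    show "summable (\<lambda>k. real (Suc k) * cmod (d (Suc k)) + cmod b * (real k * cmod (d k)))"
      by (intro summable_add summable_mult s1 s)
    fix k :: nat
    have "cmod (e k) \<le> cmod (d (Suc k)) + cmod b * cmod (d k)"
      unfolding e_eq by (metis norm_triangle_ineq4 norm_mult)
    then have "real k * cmod (e k) \<le> real k * (cmod (d (Suc k)) + cmod b * cmod (d k))"
      by (rule mult_left_mono) simp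
    also have "\<dots> \<le> real (Suc k) * cmod (d (Suc k)) + cmod b * (real k * cmod (d k))"
      by (simp add: algebra_simps)
    finally show "norm (real k * cmod (e k)) \<le> real (Suc k) * cmod (d (Suc k)) + cmod b * (real k * cmod (d k))"
      by simp
  qed
  define A where "A = (\<Sum>k. real k * cmod (d k))"
  define B where "B = (\<Sum>k. real k * cmod (e k))"
  have key: "cmod b * (real k * cmod (d k)) \<le> real (Suc k) * cmod (d (Suc k)) + real k * cmod (e k)" for k
  proof -
    have "b * d k = d (Suc k) - e k" using e_eq[of k] by simp
    then have "cmod b * cmod (d k) \<le> cmod (d (Suc k)) + cmod (e k)"
      by (metis norm_mult norm_triangle_ineq4)
    then have "real k * (cmod b * cmod (d k)) \<le> real k * (cmod (d (Suc k)) + cmod (e k))"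
      by (rule mult_left_mono) simp
    also have "\<dots> \<le> real (Suc k) * cmod (d (Suc k)) + real k * cmod (e k)"
      by (simp add: algebra_simps)
    finally show ?thesis by (simp add: algebra_simps)
  qed
  have "cmod b * A = (\<Sum>k. cmod b * (real k * cmod (d k)))"
    unfolding A_def using suminf_mult[OF s] by simp
  also have "\<dots> \<le> (\<Sum>k. real (Suc k) * cmod (d (Suc k)) + real k * cmod (e k))"
    by (rule suminf_le) (use key s1 se s in \<open>auto intro: summable_mult summable_add\<close>)
  also have "\<dots> = (\<Sum>k. real (Suc k) * cmod (d (Suc k))) + B"
    unfolding B_def by (rule suminf_add[OF s1 se, symmetric])
  also have "(\<Sum>k. real (Suc k) * cmod (d (Suc k))) = A"
    unfolding A_def using suminf_split_head[OF s] by simp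
  finally have AB: "cmod b * A \<le> A + B" .
  define M where "M = (SUP k. cmod (x k))"
  define M' where "M' = (SUP k. cmod (y k))"
  have bx: "bdd_above (range (\<lambda>k. cmod (x k)))" using bdd_tend[OF t] .
  have by': "bdd_above (range (\<lambda>k. cmod (y k)))" using bdd_tend[OF ty] .
  have "M \<le> (M + M') / cmod b"
    unfolding M_def
  proof (rule cSUP_least)
    fix k
    have "b * x k = x (Suc k) - y k" by (simp add: y_def Sop_def)
    then have "cmod b * cmod (x k) \<le> cmod (x (Suc k)) + cmod (y k)"
      by (metis norm_mult norm_triangle_ineq4)
    also have "\<dots> \<le> M + M'" unfolding M_def M'_def
      by (intro add_mono cSUP_upper bx by') auto
    finally show "cmod (x k) \<le> ((SUP k. cmod (x k)) + M') / cmod b"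
      using b by (subst pos_le_divide_eq) (auto simp: M_def mult.commute)
  qed simp
  then have MM: "cmod b * M \<le> M + M'" using b by (subst (asm) pos_le_divide_eq) (auto simp: mult.commute)
  have "hahn_norm x = A + M" by (simp add: hahn_norm_def A_def M_def d_def)
  moreover have "hahn_norm (Sop b x) = B + M'" by (simp add: hahn_norm_def B_def M'_def e_def y_def)
  moreover have "(cmod b - 1) * (A + M) \<le> B + M'" using AB MM by (simp add: algebra_simps)
  ultimately show ?thesis using b by (simp add: field_simps)
qed

lemma inj_Sop: assumes b: "cmod b = 1" shows "inj_on (Sop b) hahn"
proof (rule inj_onI)
  fix x y assume x: "x \<in> hahn" and y: "y \<in> hahn" and eq: "Sop b x = Sop b y"
  define z where "z = (\<lambda>k. x k - y k)"
  have zs: "z (Suc k) = b * z k" for k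
    using fun_cong[OF eq, of k] by (simp add: Sop_def z_def algebra_simps)
  have zn: "cmod (z k) = cmod (z 0)" for k by (induction k) (simp_all add: zs norm_mult b)
  have "x \<longlonglongrightarrow> 0" "y \<longlonglongrightarrow> 0" using x y by (auto simp: hahn_def)
  then have "z \<longlonglongrightarrow> 0" unfolding z_def using tendsto_diff by fastforce
  then have "(\<lambda>k. cmod (z k)) \<longlonglongrightarrow> 0" using tendsto_norm_zero by blast
  moreover have "(\<lambda>k. cmod (z k)) = (\<lambda>k. cmod (z 0))" by (rule ext) (rule zn)
  ultimately have "(\<lambda>k. cmod (z 0)) \<longlonglongrightarrow> 0" by simp
  then have "cmod (z 0) = 0" using LIMSEQ_const_iff by blast
  then have "z k = 0" for k using zn[of k] by simp
  then show "x = y" by (auto simp: z_def fun_eq_iff)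
qed

lemma unbounded_Sop: assumes b: "cmod b = 1"
  shows "\<not> (\<exists>C. \<forall>x\<in>hahn. hahn_norm x \<le> C * hahn_norm (Sop b x))"
proof
  assume "\<exists>C. \<forall>x\<in>hahn. hahn_norm x \<le> C * hahn_norm (Sop b x)"
  then obtain C where C: "\<And>x. x \<in> hahn \<Longrightarrow> hahn_norm x \<le> C * hahn_norm (Sop b x)" by blast
  define r :: real where "r = 1 - 1 / (2 * (\<bar>C\<bar> + 1))"
  have r0: "0 \<le> r" "r < 1" unfolding r_def by (auto simp: field_simps)
  define q where "q = b * of_real r"
  have q: "cmod q = r" using b r0 by (simp add: q_def norm_mult)
  define x where "x = (\<lambda>k. q ^ k)"
  have xh: "x \<in> hahn" unfolding x_def using q r0 by (intro geo_hahn) simp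
  have "Sop b x = (\<lambda>k. (b * of_real (r - 1)) * x k)"
    by (simp add: Sop_def x_def q_def fun_eq_iff algebra_simps)
  then have "hahn_norm (Sop b x) = cmod (b * of_real (r - 1)) * hahn_norm x"
    using hahn_norm_scale[OF xh] by simp
  also have "cmod (b * of_real (r - 1)) = 1 - r" using b r0 by (simp only: norm_mult norm_of_real) simp
  finally have eq: "hahn_norm (Sop b x) = (1 - r) * hahn_norm x" .
  have H: "1 \<le> hahn_norm x" using hahn_norm_ge[OF xh, of 0] by (simp add: x_def)
  have "\<bar>C\<bar> * (1 - r) < 1" unfolding r_def by (auto simp: field_simps)
  then have "C * (1 - r) * hahn_norm x < hahn_norm x"
  proof -
    have "C * (1 - r) \<le> \<bar>C\<bar> * (1 - r)" using r0 by (intro mult_right_mono) auto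
    then have "C * (1 - r) < 1" using \<open>\<bar>C\<bar> * (1 - r) < 1\<close> by linarith
    then show ?thesis using H by (simp add: mult_less_cancel_right1)
  qed
  moreover have "hahn_norm x \<le> C * ((1 - r) * hahn_norm x)" using C[OF xh] eq by simp
  ultimately show False by (simp add: algebra_simps)
qed

lemma dense_Sop:
  assumes b: "b \<noteq> 0" and y: "y \<in> hahn" and e: "\<epsilon> > 0"
  shows "\<exists>x\<in>hahn. hahn_norm (\<lambda>k. Sop b x k - y k) < \<epsilon>"
proof -
  define f where "f = (\<lambda>k. real k * cmod (y k - y (Suc k)))"
  have s: "summable f" and t: "y \<longlonglongrightarrow> 0" using y by (auto simp: hahn_def f_def)
  obtain N1 where N1: "\<And>n. n \<ge> N1 \<Longrightarrow> norm (\<Sum>i. f (i + n)) < \<epsilon>/3"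
    using suminf_exist_split[OF _ s, of "\<epsilon>/3"] e by auto
  have "\<exists>no. \<forall>n\<ge>no. norm (y n - 0) < \<epsilon>/3" using t e unfolding LIMSEQ_iff by (meson divide_pos_pos zero_less_numeral)
  then obtain N2 where N2: "\<And>n. n \<ge> N2 \<Longrightarrow> cmod (y n) < \<epsilon>/3" by auto
  define M where "M = max N1 N2"
  define N where "N = Suc M"
  define g where "g = inverse b"
  define x where "x = (\<lambda>k. - (\<Sum>j\<in>{k..<N}. g ^ (Suc j - k) * y j))"
  have Sx: "Sop b x k = (if k < N then y k else 0)" for k
  proof (cases "k < N")
    case True
    have bg: "b * g ^ (Suc j - k) = g ^ (Suc j - Suc k)" if "Suc k \<le> j" for j
    proof -
      have "Suc j - k = Suc (Suc j - Suc k)" using that by simp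
      then show ?thesis using b by (simp add: g_def)
    qed
    have "b * x k = - (b * (g * y k) + (\<Sum>j\<in>{Suc k..<N}. b * g ^ (Suc j - k) * y j))"
      using True by (simp add: x_def sum.atLeast_Suc_lessThan sum_distrib_left algebra_simps)
    also have "(\<Sum>j\<in>{Suc k..<N}. b * g ^ (Suc j - k) * y j) = (\<Sum>j\<in>{Suc k..<N}. g ^ (Suc j - Suc k) * y j)"
      by (rule sum.cong) (auto simp: bg)
    also have "b * (g * y k) = y k" using b by (simp add: g_def)
    finally have bx: "b * x k = - (y k + (\<Sum>j\<in>{Suc k..<N}. g ^ (Suc j - Suc k) * y j))" .
    have xs: "x (Suc k) = - (\<Sum>j\<in>{Suc k..<N}. g ^ (Suc j - Suc k) * y j)" by (simp only: x_def)
    show ?thesis unfolding Sop_def xs bx using True by simp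
  next
    case False
    then show ?thesis by (simp add: Sop_def x_def)
  qed
  have x0: "x k = 0" if "k \<ge> N" for k using that by (simp add: x_def)
  have xh: "x \<in> hahn"
  proof -
    have "(\<lambda>k. real k * cmod (x k - x (Suc k))) sums (\<Sum>k\<in>{..<N}. real k * cmod (x k - x (Suc k)))"
      by (rule sums_finite) (auto simp: x0)
    moreover have "x \<longlonglongrightarrow> 0"
      by (rule tendsto_eventually) (auto simp: eventually_sequentially intro: x0)
    ultimately show ?thesis by (auto simp: hahn_def sums_iff)
  qed
  define w where "w = (\<lambda>k. Sop b x k - y k)"
  have w: "w k = (if k < N then 0 else - y k)" for k by (simp add: w_def Sx)
  define G where "G = (\<lambda>k. real k * cmod (w k - w (Suc k)))"
  have Gs: "G (i + N) = f (i + N)" for i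
    by (simp add: G_def f_def w norm_minus_commute)
  have sG: "summable G"
    using summable_iff_shift[of G N] summable_iff_shift[of f N] s Gs by simp
  have G0: "G k = 0" if "k < M" for k using that by (simp add: G_def w N_def)
  have "sum G {..<N} = G M" unfolding N_def by (simp add: G0)
  also have "G M = real M * cmod (y N)" by (simp add: G_def w N_def)
  finally have sumG: "sum G {..<N} = real M * cmod (y N)" .
  define T where "T = (\<Sum>i. f (i + N))"
  have sT: "summable (\<lambda>i. f (i + N))" using s summable_iff_shift[of f N] by simp
  have T0: "0 \<le> T" unfolding T_def by (rule suminf_nonneg[OF sT]) (simp add: f_def)
  have T1: "T < \<epsilon>/3" using N1[of N] T0 unfolding T_def by (simp add: N_def M_def)
  have yN: "real M * cmod (y N) \<le> T"
  proof -
    define d where "d = (\<lambda>i. y (i + N) - y (Suc i + N))"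
    have "(\<lambda>i. y (i + N)) \<longlonglongrightarrow> 0" using LIMSEQ_ignore_initial_segment[OF t] .
    then have "d sums (y (0 + N) - 0)" unfolding d_def by (rule telescope_sums')
    then have dsum: "y N = suminf d" by (simp add: sums_iff)
    have dle: "norm (d i) \<le> f (i + N)" for i
    proof -
      have "1 \<le> real (i + N)" by (simp add: N_def)
      then have "1 * cmod (d i) \<le> real (i + N) * cmod (d i)" by (intro mult_right_mono) auto
      then show ?thesis by (simp add: f_def d_def)
    qed
    have snd: "summable (\<lambda>i. norm (d i))"
      by (rule summable_comparison_test'[OF sT]) (simp add: dle)
    have "cmod (y N) \<le> (\<Sum>i. norm (d i))" unfolding dsum by (rule summable_norm[OF snd])
    then have "real M * cmod (y N) \<le> real M * (\<Sum>i. norm (d i))" by (rule mult_left_mono) simp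
    also have "\<dots> = (\<Sum>i. real M * norm (d i))" using suminf_mult[OF snd] by simp
    also have "\<dots> \<le> T" unfolding T_def
    proof (rule suminf_le)
      fix i
      have "real M * norm (d i) \<le> real (i + N) * norm (d i)" by (intro mult_right_mono) (auto simp: N_def)
      then show "real M * norm (d i) \<le> f (i + N)" by (simp add: f_def d_def)
    qed (use snd sT in \<open>auto intro: summable_mult\<close>)
    finally show ?thesis .
  qed
  have "suminf G = (\<Sum>i. G (i + N)) + sum G {..<N}" by (rule suminf_split_initial_segment[OF sG])
  also have "(\<Sum>i. G (i + N)) = T" unfolding T_def by (simp add: Gs)
  finally have sumv: "suminf G \<le> 2 * T" using sumG yN by simp
  have sup: "(SUP k. cmod (w k)) \<le> \<epsilon>/3"
  proof (rule cSUP_least)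
    fix k
    show "cmod (w k) \<le> \<epsilon>/3"
    proof (cases "k < N")
      case True then show ?thesis using e by (simp add: w)
    next
      case False
      then have "k \<ge> N2" by (simp add: N_def M_def)
      then show ?thesis using N2[of k] False by (simp add: w)
    qed
  qed simp
  have "hahn_norm w = suminf G + (SUP k. cmod (w k))" by (simp add: hahn_norm_def G_def)
  also have "\<dots> < \<epsilon>" using sumv sup T1 by linarith
  finally show ?thesis using xh unfolding w_def by blast
qed

lemma zero_hahn: "(\<lambda>k. 0) \<in> hahn" by (simp add: hahn_def)

theorem theorem4p6:
  shows "cont_spectrum fwd_diff hahn hahn_norm = {\<alpha>. cmod (1 - \<alpha>) = 1}"
proof (rule set_eqI)
  fix \<alpha> :: complex
  define b where "b = 1 - \<alpha>"
  have Seq: "(\<lambda>x k. \<alpha> * x k - fwd_diff x k) = Sop b"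
    by (auto simp: fun_eq_iff Sop_def fwd_diff_def b_def algebra_simps)
  have mem: "\<alpha> \<in> cont_spectrum fwd_diff hahn hahn_norm \<longleftrightarrow>
      inj_on (Sop b) hahn \<and> (\<forall>y\<in>hahn. \<forall>\<epsilon>>0. \<exists>x\<in>hahn. hahn_norm (\<lambda>k. Sop b x k - y k) < \<epsilon>)
      \<and> \<not> (\<exists>C. \<forall>x\<in>hahn. hahn_norm x \<le> C * hahn_norm (Sop b x))"
    unfolding cont_spectrum_def Let_def Seq[symmetric] by simp
  show "\<alpha> \<in> cont_spectrum fwd_diff hahn hahn_norm \<longleftrightarrow> \<alpha> \<in> {\<alpha>. cmod (1 - \<alpha>) = 1}"
  proof (cases "cmod b = 1")
    case True
    then have "b \<noteq> 0" by auto
    then show ?thesis unfolding mem using True inj_Sop unbounded_Sop dense_Sop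
      by (auto simp: b_def)
  next
    case False
    have "\<alpha> \<notin> cont_spectrum fwd_diff hahn hahn_norm"
    proof (cases "cmod b < 1")
      case True
      define x where "x = (\<lambda>k. b ^ k)"
      have xh: "x \<in> hahn" unfolding x_def using True by (rule geo_hahn)
      have "Sop b x = Sop b (\<lambda>k. 0)" by (simp add: Sop_def x_def fun_eq_iff)
      moreover have "x \<noteq> (\<lambda>k. 0)" by (auto simp: x_def fun_eq_iff intro: exI[of _ 0])
      ultimately have "\<not> inj_on (Sop b) hahn" using xh zero_hahn by (meson inj_onD)
      then show ?thesis unfolding mem by blast
    next
      case False2: False
      then have "1 < cmod b" using False by simp
      then have "\<forall>x\<in>hahn. hahn_norm x \<le> (1 / (cmod b - 1)) * hahn_norm (Sop b x)"
        using bounded_inv by blast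
      then show ?thesis unfolding mem by blast
    qed
    then show ?thesis using False by (simp add: b_def)
  qed
qed

end
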